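(* For all integers $n\geq0$, \[ \sum_{j=0}^n\binom{2j}{j}\binom{2(n-j)}{n-j}O_jO_{n-j}=4^{n-1}\sum_{j=1}^n\frac{H_{n-j}}{j}. \]
   Context: $H_n=\sum_{j=1}^n\frac1j$ ($H_0=0$) and $O_n=\sum_{j=1}^n\frac1{2j-1}$ ($O_0=0$). An empty sum is $0$. *)

theory Defs
  imports "HOL-Analysis.Analysis"
begin

definition oharm :: "nat \<Rightarrow> real" where
  "oharm n = (\<Sum>j=1..n. 1 / (2 * real j - 1))"

end

theory Submission
  imports Defs "HOL-Computational_Algebra.Formal_Power_Series"
begin

definition PP :: "nat \<Rightarrow> real \<Rightarrow> real" where
  "PP j a = pochhammer a j / fact j"
definition SS :: "nat \<Rightarrow> real \<Rightarrow> real" where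
  "SS j a = (\<Sum>k<j. 1 / (a + real k))"
definition TT :: "nat \<Rightarrow> real \<Rightarrow> real" where
  "TT j a = (\<Sum>k<j. 1 / (a + real k)^2)"

lemma PP_gchoose: "PP j a = (-1)^j * ((-a) gchoose j)"
  by (simp add: PP_def gbinomial_pochhammer)

lemma vand: "(\<Sum>j=0..n. PP j a * PP (n-j) b) = PP n (a+b)"
proof -
  have "(\<Sum>j=0..n. PP j a * PP (n-j) b) = (\<Sum>j=0..n. (-1)^n * (((-a) gchoose j) * ((-b) gchoose (n-j))))"
  proof (rule sum.cong)
    fix j assume "j \<in> {0..n}"
    then have "(-1::real)^j * (-1)^(n-j) = (-1)^n"
      by (simp add: power_add[symmetric])
    then show "PP j a * PP (n-j) b = (-1)^n * (((-a) gchoose j) * ((-b) gchoose (n-j)))"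
      unfolding PP_gchoose by (metis mult.assoc mult.left_commute)
  qed simp
  also have "\<dots> = (-1)^n * ((-a) + (-b) gchoose n)"
    by (simp add: sum_distrib_left[symmetric] gbinomial_Vandermonde)
  also have "\<dots> = PP n (a+b)" by (simp add: PP_gchoose)
  finally show ?thesis .
qed

lemma PP_Suc: "PP (Suc j) a = PP j a * ((a + real j) / (real j + 1))"
  by (simp add: PP_def pochhammer_Suc)

lemma dPP: "a > 0 \<Longrightarrow> (PP j has_real_derivative PP j a * SS j a) (at a)"
proof (induction j)
  case 0
  then show ?case by (simp add: PP_def SS_def)
next
  case (Suc j)
  have e: "PP (Suc j) = (\<lambda>x. PP j x * ((x + real j) / (real j + 1)))"
    by (rule ext) (simp add: PP_Suc)
  have "((\<lambda>x. PP j x * ((x + real j) / (real j + 1))) has_real_derivative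
        PP j a * SS j a * ((a + real j) / (real j + 1)) + PP j a * (1 / (real j + 1))) (at a)"
    by (rule derivative_eq_intros Suc | simp)+
  moreover have "PP j a * SS j a * ((a + real j) / (real j + 1)) + PP j a * (1 / (real j + 1))
      = PP (Suc j) a * SS (Suc j) a"
  proof -
    have s: "SS (Suc j) a = SS j a + 1 / (a + real j)" by (simp add: SS_def)
    have "a + real j \<noteq> 0" using Suc.prems by simp
    moreover have "real j + 1 \<noteq> 0" by simp
    ultimately show ?thesis unfolding s PP_Suc by (simp add: divide_simps) (simp add: algebra_simps)
  qed
  ultimately show ?case by (simp add: e)
qed

lemma dSS: "a > 0 \<Longrightarrow> (SS j has_real_derivative - TT j a) (at a)"
proof -
  assume a: "a > 0"
  have e: "SS j = (\<lambda>x. \<Sum>k<j. 1 / (x + real k))" by (rule ext) (simp add: SS_def)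
  have "((\<lambda>x. \<Sum>k<j. 1 / (x + real k)) has_real_derivative (\<Sum>k<j. - 1 / (a + real k)^2)) (at a)"
  proof (rule DERIV_sum)
    fix k assume "k \<in> {..<j}"
    have "a + real k \<noteq> 0" using a by simp
    then show "((\<lambda>x. 1 / (x + real k)) has_real_derivative - 1 / (a + real k)^2) (at a)"
      by (auto intro!: derivative_eq_intros simp: power2_eq_square)
  qed
  moreover have "(\<Sum>k<j. - 1 / (a + real k)^2) = - TT j a"
    by (simp add: TT_def sum_negf[symmetric])
  ultimately show ?thesis by (simp add: e)
qed

lemma dQQ: "a > 0 \<Longrightarrow> ((\<lambda>x. PP j x * SS j x) has_real_derivative PP j a * (SS j a ^ 2 - TT j a)) (at a)"
proof -
  assume a: "a > 0"
  have "((\<lambda>x. PP j x * SS j x) has_real_derivative PP j a * SS j a * SS j a + PP j a * (- TT j a)) (at a)"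
    using DERIV_mult[OF dPP[OF a] dSS[OF a]] by (simp add: algebra_simps)
  then show ?thesis by (simp add: power2_eq_square algebra_simps)
qed


lemma step1:
  assumes a: "a > 0" and b: "b > 0"
  shows "(\<Sum>j=0..n. PP j a * SS j a * PP (n-j) b) = PP n (a+b) * SS n (a+b)"
proof -
  have f: "(\<lambda>x. \<Sum>j=0..n. PP j x * PP (n-j) b) = (\<lambda>x. PP n (x+b))"
    by (rule ext) (simp add: vand)
  have d1: "((\<lambda>x. \<Sum>j=0..n. PP j x * PP (n-j) b) has_real_derivative
      (\<Sum>j=0..n. PP j a * SS j a * PP (n-j) b)) (at a)"
    by (rule DERIV_sum, rule DERIV_cmult_right, rule dPP[OF a])
  have "a + b > 0" using a b by simp
  from dPP[OF this, of n] have d2: "((\<lambda>x. PP n (x+b)) has_real_derivative PP n (a+b) * SS n (a+b)) (at a)"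
    by (simp add: DERIV_shift)
  show ?thesis using DERIV_unique[OF d1] d2 f by simp
qed

lemma step2:
  assumes a: "a > 0" and b: "b > 0"
  shows "(\<Sum>j=0..n. PP j a * SS j a * (PP (n-j) b * SS (n-j) b)) = PP n (a+b) * (SS n (a+b)^2 - TT n (a+b))"
proof -
  have d1: "((\<lambda>x. \<Sum>j=0..n. PP j a * SS j a * PP (n-j) x) has_real_derivative
      (\<Sum>j=0..n. PP j a * SS j a * (PP (n-j) b * SS (n-j) b))) (at b)"
    by (rule DERIV_sum, rule DERIV_cmult, rule dPP[OF b])
  have "b + a > 0" using a b by simp
  from dQQ[OF this, of n] have d2: "((\<lambda>x. PP n (x+a) * SS n (x+a)) has_real_derivative PP n (b+a) * (SS n (b+a)^2 - TT n (b+a))) (at b)"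
    using DERIV_shift[of "\<lambda>x. PP n x * SS n x" _ b a] by simp
  then have d2: "((\<lambda>x. PP n (x+a) * SS n (x+a)) has_real_derivative PP n (a+b) * (SS n (a+b)^2 - TT n (a+b))) (at b)"
    by (simp only: add.commute[of b a])
  have "((\<lambda>x. \<Sum>j=0..n. PP j a * SS j a * PP (n-j) x) has_real_derivative PP n (a+b) * (SS n (a+b)^2 - TT n (a+b))) (at b)"
  proof (rule has_field_derivative_transform_within_open[OF d2, of "{0<..}"])
    fix x :: real assume "x \<in> {0<..}"
    then show "PP n (x+a) * SS n (x+a) = (\<Sum>j=0..n. PP j a * SS j a * PP (n-j) x)"
      using step1[OF a, of x n] by (simp add: add.commute[of x a])
  next
    show "open {0::real<..}" by simp
  next
    show "b \<in> {0<..}" using b by simp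
  qed
  then show ?thesis by (rule DERIV_unique[OF d1])
qed


lemma poch_half: "pochhammer (1/2::real) j * 4^j * fact j = fact (2*j)"
proof (induction j)
  case 0 then show ?case by simp
next
  case (Suc j)
  have "fact (2 * Suc j) = (fact (2*j) :: real) * ((2*real j + 1) * (2*real j + 2))"
    by (simp add: algebra_simps)
  also have "\<dots> = pochhammer (1/2::real) j * 4^j * fact j * ((2*real j + 1) * (2*real j + 2))"
    by (simp add: Suc.IH)
  also have "\<dots> = pochhammer (1/2::real) (Suc j) * 4^(Suc j) * fact (Suc j)"
    by (simp add: pochhammer_Suc algebra_simps)
  finally show ?case by simp
qed

lemma PP_half: "PP j (1/2) = real ((2*j) choose j) / 4^j"
proof -
  have "real ((2*j) choose j) = fact (2*j) / (fact j * fact j)"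
    using binomial_fact[of j "2*j"] by simp
  moreover have "fact j * (4^j * pochhammer (1/2::real) j) = fact j * (fact j * real ((2*j) choose j))"
  proof -
    have "real ((2*j) choose j) * (fact j * fact j) = fact (2*j)"
      using binomial_fact[of j "2*j"] by (simp add: field_simps)
    then show ?thesis using poch_half[of j] by (simp add: algebra_simps)
  qed
  then have "4^j * pochhammer (1/2::real) j = fact j * real ((2*j) choose j)"
    by (subst (asm) mult_left_cancel) auto
  ultimately show ?thesis unfolding PP_def
    by (simp add: field_simps)
qed

lemma SS_half: "SS j (1/2) = 2 * oharm j"
proof (induction j)
  case 0 then show ?case by (simp add: SS_def oharm_def)
next
  case (Suc j)
  have "SS (Suc j) (1/2) = SS j (1/2) + 1 / (1/2 + real j)" by (simp add: SS_def)
  moreover have "oharm (Suc j) = oharm j + 1 / (2 * real (Suc j) - 1)" by (simp add: oharm_def)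
  moreover have "1 / (1/2 + real j) = 2 * (1 / (2 * real (Suc j) - 1))" by (simp add: field_simps)
  ultimately show ?case using Suc.IH by simp
qed

lemma PP_one: "PP n 1 = 1"
  by (simp add: PP_def pochhammer_fact[symmetric])

lemma SS_one: "SS n 1 = harm n"
  by (simp add: SS_def harm_altdef field_simps inverse_eq_divide)

lemma TT_Suc: "TT (Suc n) 1 = TT n 1 + 1 / (real n + 1)^2"
  by (simp add: TT_def add.commute)

lemma frac_help: "(m::real) > 0 \<Longrightarrow> j > 0 \<Longrightarrow> 1 / (m * j) = (1/m + 1/j) / (m + j)"
proof -
  assume a: "m > 0" "j > 0"
  then have "j * (j * m) + j * (m * m) > 0" by (simp add: add_pos_pos)
  then show ?thesis using a by (simp add: field_simps)
qed

lemma sq_help: "(x::real) > 0 \<Longrightarrow> (h + 1/x)^2 - (t + 1/x^2) = h^2 - t + 2*h/x"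
  by (simp add: field_simps power2_eq_square)

lemma rev_sum: "(\<Sum>j=1..n. 1 / real (Suc n - j)) = (harm n :: real)"
proof -
  have "(\<Sum>j=1..n. 1 / real (Suc n - j)) = (\<Sum>j=1..n. 1 / real (Suc n - (n + 1 - j)))"
    by (rule sum.atLeastAtMost_rev)
  also have "\<dots> = (\<Sum>j=1..n. inverse (real j))"
    by (rule sum.cong) (auto simp: inverse_eq_divide)
  finally show ?thesis by (simp add: harm_def)
qed

lemma Fstep: "(\<Sum>j=1..Suc n. harm (Suc n - j) / real j) = (\<Sum>j=1..n. harm (n - j) / real j) + 2 * harm n / (real n + 1)"
proof -
  have "(\<Sum>j=1..Suc n. harm (Suc n - j) / real j) = (\<Sum>j=1..n. harm (Suc n - j) / real j) + harm 0 / real (Suc n)"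
    by simp
  also have "(\<Sum>j=1..n. harm (Suc n - j) / real j) = (\<Sum>j=1..n. harm (n - j) / real j) + (\<Sum>j=1..n. 1 / (real (Suc n - j) * real j))"
  proof -
    have "(\<Sum>j=1..n. harm (Suc n - j) / real j) = (\<Sum>j=1..n. harm (n - j) / real j + 1 / (real (Suc n - j) * real j))"
    proof (rule sum.cong)
      fix j assume "j \<in> {1..n}"
      then have "Suc n - j = Suc (n - j)" by auto
      then show "harm (Suc n - j) / real j = harm (n - j) / real j + 1 / (real (Suc n - j) * real j)"
        by (simp only: harm_Suc) (simp add: add_divide_distrib inverse_eq_divide)
    qed simp
    then show ?thesis by (simp add: sum.distrib)
  qed
  also have "(\<Sum>j=1..n. 1 / (real (Suc n - j) * real j)) = (\<Sum>j=1..n. (1 / real (Suc n - j) + 1 / real j) / (real n + 1))"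
  proof (rule sum.cong)
    fix j assume j: "j \<in> {1..n}"
    then have "real (Suc n - j) + real j = real n + 1" "real j > 0" "real (Suc n - j) > 0" by auto
    then show "1 / (real (Suc n - j) * real j) = (1 / real (Suc n - j) + 1 / real j) / (real n + 1)"
      using frac_help[of "real (Suc n - j)" "real j"] by simp
  qed simp
  also have "\<dots> = ((\<Sum>j=1..n. 1 / real (Suc n - j)) + (\<Sum>j=1..n. 1 / real j)) / (real n + 1)"
    by (simp only: sum.distrib[symmetric] sum_divide_distrib)
  also have "\<dots> = 2 * harm n / (real n + 1)"
    unfolding rev_sum by (simp add: harm_def inverse_eq_divide)
  finally show ?thesis by (simp add: harm_def)
qed

lemma Fclosed: "(\<Sum>j=1..n. harm (n - j) / real j) = harm n ^ 2 - TT n 1"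
proof (induction n)
  case 0 then show ?case by (simp add: TT_def harm_def)
next
  case (Suc n)
  have h: "harm (Suc n) = harm n + 1 / (real n + 1)" by (simp add: harm_Suc inverse_eq_divide add.commute)
  show ?case unfolding Fstep Suc.IH TT_Suc h
    using sq_help[of "real n + 1" "harm n" "TT n 1"] by simp
qed

lemma powi4: "(4::real) powi (int n - 1) = 4^n / 4"
  by (simp add: power_int_diff)

theorem corollary4:
  fixes n :: nat
  shows "(\<Sum>j=0..n. real ((2*j) choose j) * real ((2*(n-j)) choose (n-j)) * oharm j * oharm (n-j))
         = (4::real) powi (int n - 1) * (\<Sum>j=1..n. harm (n-j) / real j)"
proof -
  have h: "(1/2::real) > 0" by simp
  have "(\<Sum>j=0..n. PP j (1/2) * SS j (1/2) * (PP (n-j) (1/2) * SS (n-j) (1/2)))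
      = harm n ^ 2 - TT n 1"
    using step2[OF h h, of n] by (simp add: PP_one SS_one)
  also have "\<dots> = (\<Sum>j=1..n. harm (n-j) / real j)" by (rule Fclosed[symmetric])
  finally have e: "(\<Sum>j=0..n. PP j (1/2) * SS j (1/2) * (PP (n-j) (1/2) * SS (n-j) (1/2)))
      = (\<Sum>j=1..n. harm (n-j) / real j)" .
  have "(\<Sum>j=0..n. PP j (1/2) * SS j (1/2) * (PP (n-j) (1/2) * SS (n-j) (1/2)))
      = (\<Sum>j=0..n. real ((2*j) choose j) * real ((2*(n-j)) choose (n-j)) * oharm j * oharm (n-j)) * 4 / 4^n"
    unfolding sum_distrib_right sum_divide_distrib
  proof (rule sum.cong)
    fix j assume "j \<in> {0..n}"
    then have p: "(4::real)^j * 4^(n-j) = 4^n" by (simp add: power_add[symmetric])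
    show "PP j (1/2) * SS j (1/2) * (PP (n-j) (1/2) * SS (n-j) (1/2))
        = real ((2*j) choose j) * real ((2*(n-j)) choose (n-j)) * oharm j * oharm (n-j) * 4 / 4^n"
      unfolding PP_half SS_half p[symmetric] by (simp add: field_simps)
  qed simp
  then show ?thesis using e unfolding powi4 by (simp add: field_simps)
qed

end
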